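(* Let $x_1,x_2,y_1,y_2\in\mathbb{R}$, $d>0$, $\eta>0$, $\sigma^2>0$, $R>0$, $\tilde\epsilon=\frac{\sigma^2}{\eta}(e^R-1)$ and $\tilde\tau_m=\tilde\epsilon(y_m^2+d^2)$. Consider $$\min_{P_1,P_2,x\in\mathbb{R}}\ P_1+P_2\quad\text{s.t.}\quad -P_2+\frac{\tilde\epsilon\eta}{\sigma^2}P_1+\tilde\epsilon(x-x_2)^2+\tilde\tau_2\le0,\qquad -P_1+\tilde\epsilon(x-x_1)^2+\tilde\tau_1\le0.$$ Its optimal solution is $$x^*=\frac{x_2}{e^R+1}+\frac{e^Rx_1}{e^R+1},\quad P_1^*=\tilde\epsilon(x^*-x_1)^2+\tilde\tau_1,\quad P_2^*=\frac{\tilde\epsilon\eta}{\sigma^2}P_1^*+\tilde\epsilon(x^*-x_2)^2+\tilde\tau_2.$$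
   Context: This is a relaxed total-power-minimization problem for two-user NOMA with a pinching antenna at $(x,0,d)$, where user 1 performs successive interference cancellation; the constraints encode that user 2's rate and user 1's own rate are at least $R$. *)

theory Defs
  imports Complex_Main
begin

text \<open>Feasible set of the relaxed power-minimization problem; a point is (P1, P2, x).
  eps is tilde-epsilon, tau1/tau2 are tilde-tau_1, tilde-tau_2.\<close>
definition feasible ::
  "real \<Rightarrow> real \<Rightarrow> real \<Rightarrow> real \<Rightarrow> real \<Rightarrow> real \<Rightarrow> real \<Rightarrow> real \<Rightarrow> real \<Rightarrow> real \<Rightarrow> bool" where
  "feasible eps eta sigma2 x1 x2 tau1 tau2 P1 P2 x \<longleftrightarrow>
     - P2 + (eps * eta / sigma2) * P1 + eps * (x - x2)^2 + tau2 \<le> 0 \<and>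
     - P1 + eps * (x - x1)^2 + tau1 \<le> 0"

definition optimal ::
  "real \<Rightarrow> real \<Rightarrow> real \<Rightarrow> real \<Rightarrow> real \<Rightarrow> real \<Rightarrow> real \<Rightarrow> real \<Rightarrow> real \<Rightarrow> real \<Rightarrow> bool" where
  "optimal eps eta sigma2 x1 x2 tau1 tau2 P1 P2 x \<longleftrightarrow>
     feasible eps eta sigma2 x1 x2 tau1 tau2 P1 P2 x \<and>
     (\<forall>Q1 Q2 z. feasible eps eta sigma2 x1 x2 tau1 tau2 Q1 Q2 z \<longrightarrow> P1 + P2 \<le> Q1 + Q2)"

end

theory Submission
  imports Defs
begin

theorem lemma5:
  fixes x1 x2 y1 y2 d eta sigma2 R :: real
  assumes "d > 0" and "eta > 0" and "sigma2 > 0" and "R > 0"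
  defines "eps \<equiv> sigma2 / eta * (exp R - 1)"
  defines "tau1 \<equiv> eps * (y1^2 + d^2)"
  defines "tau2 \<equiv> eps * (y2^2 + d^2)"
  defines "xs \<equiv> x2 / (exp R + 1) + exp R * x1 / (exp R + 1)"
  defines "P1s \<equiv> eps * (xs - x1)^2 + tau1"
  defines "P2s \<equiv> (eps * eta / sigma2) * P1s + eps * (xs - x2)^2 + tau2"
  shows "optimal eps eta sigma2 x1 x2 tau1 tau2 P1s P2s xs \<and>
         (\<forall>P1 P2 x. optimal eps eta sigma2 x1 x2 tau1 tau2 P1 P2 x \<longrightarrow>
            (P1, P2, x) = (P1s, P2s, xs))"
proof -
  define E where "E = exp R"
  have E1: "E > 1" using assms(4) unfolding E_def by simp
  have k: "eps * eta / sigma2 = E - 1" using assms(2,3) unfolding eps_def E_def by simp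
  have epspos: "eps > 0" using assms(2,3) E1 unfolding eps_def E_def by simp
  have xs': "xs = (x2 + E * x1) / (E + 1)" unfolding xs_def E_def by (simp add: add_divide_distrib)
  have key: "E * eps * (z - x1)^2 + eps * (z - x2)^2
      = E * eps * (xs - x1)^2 + eps * (xs - x2)^2 + eps * (E + 1) * (z - xs)^2" for z
  proof -
    have "E + 1 \<noteq> 0" using E1 by simp
    then have h: "E * (xs - x1) + (xs - x2) = 0" unfolding xs' by (simp add: field_simps)
    have "E * eps * (z - x1)^2 + eps * (z - x2)^2
      - (E * eps * (xs - x1)^2 + eps * (xs - x2)^2 + eps * (E + 1) * (z - xs)^2)
      = 2 * eps * (z - xs) * (E * (xs - x1) + (xs - x2))"
      by (simp add: algebra_simps power2_eq_square)
    then show ?thesis using h by simp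
  qed
  have sumP: "P1s + P2s = E * P1s + eps * (xs - x2)^2 + tau2"
    unfolding P2s_def k by (simp add: algebra_simps)
  have lower: "Q1 + Q2 \<ge> E * Q1 + eps * (z - x2)^2 + tau2 \<and> Q1 \<ge> eps * (z - x1)^2 + tau1
     \<and> Q1 + Q2 \<ge> P1s + P2s + eps * (E + 1) * (z - xs)^2"
    if f: "feasible eps eta sigma2 x1 x2 tau1 tau2 Q1 Q2 z" for Q1 Q2 z
  proof -
    from f have a: "Q2 \<ge> (E - 1) * Q1 + eps * (z - x2)^2 + tau2"
      and b: "Q1 \<ge> eps * (z - x1)^2 + tau1" unfolding feasible_def k by auto
    have c: "Q1 + Q2 \<ge> E * Q1 + eps * (z - x2)^2 + tau2" using a by (simp add: algebra_simps)
    have "E * Q1 \<ge> E * (eps * (z - x1)^2 + tau1)" using b E1 by simp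
    then have "Q1 + Q2 \<ge> E * eps * (z - x1)^2 + eps * (z - x2)^2 + E * tau1 + tau2"
      using c by (simp add: algebra_simps)
    also have "E * eps * (z - x1)^2 + eps * (z - x2)^2 + E * tau1 + tau2
        = P1s + P2s + eps * (E + 1) * (z - xs)^2"
    proof -
      have "E * P1s = E * eps * (xs - x1)^2 + E * tau1" by (simp add: P1s_def algebra_simps)
      then show ?thesis using key[of z] sumP by linarith
    qed
    finally show ?thesis using b c by simp
  qed
  have feas: "feasible eps eta sigma2 x1 x2 tau1 tau2 P1s P2s xs"
    unfolding feasible_def P2s_def P1s_def by simp
  have opt: "optimal eps eta sigma2 x1 x2 tau1 tau2 P1s P2s xs"
    unfolding optimal_def
  proof (intro conjI feas allI impI)
    fix Q1 Q2 z assume "feasible eps eta sigma2 x1 x2 tau1 tau2 Q1 Q2 z"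
    from lower[OF this] have "Q1 + Q2 \<ge> P1s + P2s + eps * (E + 1) * (z - xs)^2" by blast
    moreover have "eps * (E + 1) * (z - xs)^2 \<ge> 0" using epspos E1 by simp
    ultimately show "P1s + P2s \<le> Q1 + Q2" by linarith
  qed
  moreover have "(P1, P2, x) = (P1s, P2s, xs)"
    if o: "optimal eps eta sigma2 x1 x2 tau1 tau2 P1 P2 x" for P1 P2 x
  proof -
    from o have f: "feasible eps eta sigma2 x1 x2 tau1 tau2 P1 P2 x"
      and le: "P1 + P2 \<le> P1s + P2s" using feas unfolding optimal_def by blast+
    note L = lower[OF f]
    have "eps * (E + 1) * (x - xs)^2 \<le> 0" using L le by linarith
    moreover have "eps * (E + 1) > 0" using epspos E1 by simp
    ultimately have "(x - xs)^2 \<le> 0" using epspos E1 by (simp add: mult_le_0_iff)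
    then have xeq: "x = xs" by simp
    have p1: "P1 \<ge> P1s" using L xeq unfolding P1s_def by simp
    have "E * P1 \<le> E * P1s" using L[unfolded xeq] le sumP by linarith
    then have "P1 \<le> P1s" using E1 by simp
    with p1 have "P1 = P1s" by simp
    moreover have "P2 \<le> P2s" using le \<open>P1 = P1s\<close> by simp
    moreover have "P2 \<ge> P2s"
      using f xeq \<open>P1 = P1s\<close> unfolding feasible_def P2s_def by simp
    ultimately show ?thesis using xeq by simp
  qed
  ultimately show ?thesis by blast
qed

end
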